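(* For any two configurations $A,B\in\mathcal{F}_2$, there exists a feasible schedule $M$ from $A$ to $B$ over some interval $[t_0,t_1]$ of minimum makespan that does not repeat an ordering: for each of the four orderings $O$, the set $\{t\in[t_0,t_1]: M(t)\in O\}$ is empty or an interval (equivalently, the sequence of orderings visited by $M$ is a simple path in the transition graph).
   Context: Robots are axis-parallel unit squares: a robot at $p$ occupies $p+\boxdot$, $\boxdot=\{q:\|q\|_\infty\le1/2\}$. Distances use the $L_1$ norm. A configuration of two robots is a pair $(p_1,p_2)$ with $\|p_1-p_2\|_\infty\ge 1$; $\mathcal{F}_2$ is their set. A trajectory over $T=[t_0,t_1]$ is a $1$-Lipschitz (w.r.t. $L_1$) map $m:T\to\mathbb{R}^2$ with polygonal-chain image; a schedule $M=(m_1,m_2)$ is feasible if $M(t)\in\mathcal{F}_2$ for all $t$; its makespan is $t_1-t_0$. The four orderings are $\mathcal{F}_2^{\rightarrow}=\{(p_1,p_2)\in\mathcal{F}_2: x(p_1)\ge x(p_2)+1\}$, $\mathcal{F}_2^{\leftarrow}=\{x(p_2)\ge x(p_1)+1\}$, $\mathcal{F}_2^{\uparrow}=\{y(p_1)\ge y(p_2)+1\}$, $\mathcal{F}_2^{\downarrow}=\{y(p_2)\ge y(p_1)+1\}$; they cover $\mathcal{F}_2$. The transition graph is the intersection graph of the four orderings (a four-cycle: each horizontal ordering intersects each vertical one). *)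

theory Defs
  imports "HOL-Analysis.Analysis"
begin

type_synonym pt = "real \<times> real"

definition l1dist :: "pt \<Rightarrow> pt \<Rightarrow> real" where
  "l1dist p q = \<bar>fst p - fst q\<bar> + \<bar>snd p - snd q\<bar>"

text \<open>Configurations of two unit-square robots: L-infinity distance at least 1.\<close>
definition F2 :: "(pt \<times> pt) set" where
  "F2 = {(p1, p2). max \<bar>fst p1 - fst p2\<bar> \<bar>snd p1 - snd p2\<bar> \<ge> 1}"

definition polygonal_chain :: "pt set \<Rightarrow> bool" where
  "polygonal_chain S \<longleftrightarrow> (\<exists>ps. ps \<noteq> [] \<and>
      S = set ps \<union> (\<Union>i\<in>{i. Suc i < length ps}. closed_segment (ps ! i) (ps ! Suc i)))"

definition trajectory :: "(real \<Rightarrow> pt) \<Rightarrow> real \<Rightarrow> real \<Rightarrow> bool" where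
  "trajectory m t0 t1 \<longleftrightarrow> t0 \<le> t1 \<and>
     (\<forall>s\<in>{t0..t1}. \<forall>t\<in>{t0..t1}. l1dist (m s) (m t) \<le> \<bar>s - t\<bar>) \<and>
     polygonal_chain (m ` {t0..t1})"

definition feasible_schedule :: "(real \<Rightarrow> pt \<times> pt) \<Rightarrow> real \<Rightarrow> real \<Rightarrow> bool" where
  "feasible_schedule M t0 t1 \<longleftrightarrow>
     trajectory (\<lambda>t. fst (M t)) t0 t1 \<and> trajectory (\<lambda>t. snd (M t)) t0 t1 \<and>
     (\<forall>t\<in>{t0..t1}. M t \<in> F2)"

definition schedule_from_to :: "(real \<Rightarrow> pt \<times> pt) \<Rightarrow> real \<Rightarrow> real \<Rightarrow> pt \<times> pt \<Rightarrow> pt \<times> pt \<Rightarrow> bool" where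
  "schedule_from_to M t0 t1 A B \<longleftrightarrow> feasible_schedule M t0 t1 \<and> M t0 = A \<and> M t1 = B"

definition ord_right :: "(pt \<times> pt) set" where
  "ord_right = {(p1, p2). (p1, p2) \<in> F2 \<and> fst p1 \<ge> fst p2 + 1}"
definition ord_left :: "(pt \<times> pt) set" where
  "ord_left = {(p1, p2). (p1, p2) \<in> F2 \<and> fst p2 \<ge> fst p1 + 1}"
definition ord_up :: "(pt \<times> pt) set" where
  "ord_up = {(p1, p2). (p1, p2) \<in> F2 \<and> snd p1 \<ge> snd p2 + 1}"
definition ord_down :: "(pt \<times> pt) set" where
  "ord_down = {(p1, p2). (p1, p2) \<in> F2 \<and> snd p2 \<ge> snd p1 + 1}"

definition orderings :: "(pt \<times> pt) set set" where
  "orderings = {ord_right, ord_left, ord_up, ord_down}"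

end

theory Submission
  imports Defs
begin


definition l1n :: "pt \<Rightarrow> real" where "l1n p = \<bar>fst p\<bar> + \<bar>snd p\<bar>"
definition Nn :: "pt \<times> pt \<Rightarrow> real" where "Nn z = max (l1n (fst z)) (l1n (snd z))"

lemma l1dist_l1n: "l1dist p q = l1n (p - q)"
  by (simp add: l1dist_def l1n_def)

lemma l1n_add: "l1n (a + b) \<le> l1n a + l1n b"
  by (simp add: l1n_def abs_triangle_ineq add_mono)
lemma l1n_scale: "l1n (u *\<^sub>R a) = \<bar>u\<bar> * l1n a"
  by (simp add: l1n_def abs_mult algebra_simps)
lemma l1n_ge0: "l1n a \<ge> 0" by (simp add: l1n_def)
lemma l1n_minus: "l1n (a - b) = l1n (b - a)"
  by (simp add: l1n_def abs_minus_commute)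

lemma Nn_add: "Nn (a + b) \<le> Nn a + Nn b"
  unfolding Nn_def using l1n_add[of "fst a" "fst b"] l1n_add[of "snd a" "snd b"]
  by (auto simp: max_def)
lemma Nn_scale: "Nn (u *\<^sub>R a) = \<bar>u\<bar> * Nn a"
  unfolding Nn_def by (simp add: l1n_scale max_mult_distrib_left)
lemma Nn_ge0: "Nn a \<ge> 0" by (simp add: Nn_def l1n_ge0 le_max_iff_disj)
lemma Nn_minus: "Nn (a - b) = Nn (b - a)"
  unfolding Nn_def by (metis fst_diff snd_diff l1n_minus)
lemma Nn_tri: "Nn (c - a) \<le> Nn (b - a) + Nn (c - b)"
  using Nn_add[of "b - a" "c - b"] by simp
lemma Nn_zero: assumes "Nn z = 0" shows "z = 0"
proof -
  have "l1n (fst z) \<le> 0" "l1n (snd z) \<le> 0" using assms by (auto simp: Nn_def)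
  then show ?thesis by (cases z) (auto simp: l1n_def zero_prod_def abs_le_iff)
qed
lemma Nn_0[simp]: "Nn 0 = 0" by (simp add: Nn_def l1n_def)
lemma Nn_fst: "l1n (fst z) \<le> Nn z" by (simp add: Nn_def)
lemma Nn_snd: "l1n (snd z) \<le> Nn z" by (simp add: Nn_def)

fun ccost :: "(pt \<times> pt) list \<Rightarrow> real" where
  "ccost (x # y # r) = Nn (y - x) + ccost (y # r)"
| "ccost _ = 0"

fun chainok :: "(pt \<times> pt) list \<Rightarrow> bool" where
  "chainok (x # y # r) = ((\<exists>Q\<in>orderings. x \<in> Q \<and> y \<in> Q) \<and> chainok (y # r))"
| "chainok _ = True"

fun pl :: "(pt \<times> pt) list \<Rightarrow> real \<Rightarrow> pt \<times> pt" where
  "pl (x # y # r) t = (if t \<le> Nn (y - x) then x + (t / Nn (y - x)) *\<^sub>R (y - x)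
                       else pl (y # r) (t - Nn (y - x)))"
| "pl [x] t = x"
| "pl [] t = 0"

fun polyset :: "pt list \<Rightarrow> pt set" where
  "polyset (p # q # r) = closed_segment p q \<union> polyset (q # r)"
| "polyset [p] = {p}"
| "polyset [] = {}"

lemma ccost_ge0: "ccost xs \<ge> 0"
  by (induction xs rule: ccost.induct) (auto intro: add_nonneg_nonneg Nn_ge0)

lemma ccost_tri: "xs \<noteq> [] \<Longrightarrow> Nn (last xs - hd xs) \<le> ccost xs"
proof (induction xs rule: ccost.induct)
  case (1 x y r)
  then show ?case using Nn_tri[where a=x and b=y and c="last (y#r)"] by simp
qed auto

lemma ccost0_const: "ccost xs = 0 \<Longrightarrow> z \<in> set xs \<Longrightarrow> z = hd xs"
proof (induction xs rule: ccost.induct)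
  case (1 x y r)
  have a: "Nn (y - x) = 0" and b: "ccost (y # r) = 0"
    using 1(2) Nn_ge0[of "y - x"] ccost_ge0[of "y#r"] by auto
  have "y = x" using Nn_zero[OF a] by simp
  then show ?case using 1 b by auto
qed auto

lemma pl_0: "xs \<noteq> [] \<Longrightarrow> pl xs 0 = hd xs"
  by (cases xs rule: ccost.cases) (auto simp: Nn_ge0)

lemma pl_end: "xs \<noteq> [] \<Longrightarrow> pl xs (ccost xs) = last xs"
proof (induction xs rule: ccost.induct)
  case (1 x y r)
  show ?case
  proof (cases "ccost (y # r) = 0")
    case True
    have "last (y # r) = y" using ccost0_const[OF True, where z="last (y#r)"] by simp
    moreover have "x + (Nn (y - x) / Nn (y - x)) *\<^sub>R (y - x) = y"
      by (cases "Nn (y - x) = 0") (auto dest: Nn_zero)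
    ultimately show ?thesis using True by simp
  next
    case False
    then have "ccost (y # r) > 0" using ccost_ge0[of "y#r"] by linarith
    then show ?thesis using 1 by simp
  qed
qed auto

lemma pl_shift:
  assumes "t \<ge> Nn (y - x)"
  shows "pl (x # y # r) t = pl (y # r) (t - Nn (y - x))"
proof (cases "t = Nn (y - x)")
  case True
  have "x + (Nn (y - x) / Nn (y - x)) *\<^sub>R (y - x) = y"
    by (cases "Nn (y - x) = 0") (auto dest: Nn_zero)
  then show ?thesis using True by (simp add: pl_0)
next
  case False then show ?thesis using assms by simp
qed

lemma pl_first:
  assumes "t \<le> Nn (y - x)"
  shows "pl (x # y # r) t = x + (t / Nn (y - x)) *\<^sub>R (y - x)"
  using assms by simp

definition aff :: "(pt \<times> pt \<Rightarrow> real) \<Rightarrow> bool" where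
  "aff g \<longleftrightarrow> (\<forall>x y u. g (x + u *\<^sub>R (y - x)) = g x + u * (g y - g x)) \<and>
             (\<forall>x y. \<bar>g x - g y\<bar> \<le> 2 * Nn (x - y))"

lemma aff_intro:
  assumes "\<And>x y. g (x + y) = g x + g y" "\<And>x u. g (u *\<^sub>R x) = u * g x"
    "\<And>z. \<bar>g z\<bar> \<le> 2 * Nn z"
  shows "aff g"
proof -
  have m: "g (x - y) = g x - g y" for x y
    using assms(1)[of "x - y" y] by simp
  have "g (x + u *\<^sub>R (y - x)) = g x + u * (g y - g x)" for x y u
    by (simp add: assms(1,2) m right_diff_distrib)
  moreover have "\<bar>g x - g y\<bar> \<le> 2 * Nn (x - y)" for x y
    using assms(3)[of "x - y"] m by simp
  ultimately show ?thesis unfolding aff_def by blast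
qed

lemma fst_le: "\<bar>fst (fst z)\<bar> \<le> Nn z" "\<bar>snd (fst z)\<bar> \<le> Nn z"
  "\<bar>fst (snd z)\<bar> \<le> Nn z" "\<bar>snd (snd z)\<bar> \<le> Nn z"
  by (auto simp: Nn_def l1n_def le_max_iff_disj)

lemma ord_right_eq: "ord_right = {z. fst (fst z) - fst (snd z) \<ge> 1}"
  by (auto simp: ord_right_def F2_def le_max_iff_disj)
lemma ord_left_eq: "ord_left = {z. fst (snd z) - fst (fst z) \<ge> 1}"
  by (auto simp: ord_left_def F2_def le_max_iff_disj)
lemma ord_up_eq: "ord_up = {z. snd (fst z) - snd (snd z) \<ge> 1}"
  by (auto simp: ord_up_def F2_def le_max_iff_disj)
lemma ord_down_eq: "ord_down = {z. snd (snd z) - snd (fst z) \<ge> 1}"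
  by (auto simp: ord_down_def F2_def le_max_iff_disj)

lemma F2_orderings: "F2 = \<Union>orderings"
  by (auto simp: orderings_def ord_right_eq ord_left_eq ord_up_eq ord_down_eq F2_def
      le_max_iff_disj abs_real_def split: if_splits)

lemma aff_g1: "aff (\<lambda>z. fst (fst z) - fst (snd z))"
proof (rule aff_intro)
  fix z :: "pt \<times> pt"
  have "\<bar>fst (fst z) - fst (snd z)\<bar> \<le> \<bar>fst (fst z)\<bar> + \<bar>fst (snd z)\<bar>" by linarith
  then show "\<bar>fst (fst z) - fst (snd z)\<bar> \<le> 2 * Nn z" using fst_le[of z] by linarith
qed (auto simp: algebra_simps)
lemma aff_g2: "aff (\<lambda>z. fst (snd z) - fst (fst z))"
proof (rule aff_intro)
  fix z :: "pt \<times> pt"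
  have "\<bar>fst (snd z) - fst (fst z)\<bar> \<le> \<bar>fst (fst z)\<bar> + \<bar>fst (snd z)\<bar>" by linarith
  then show "\<bar>fst (snd z) - fst (fst z)\<bar> \<le> 2 * Nn z" using fst_le[of z] by linarith
qed (auto simp: algebra_simps)
lemma aff_g3: "aff (\<lambda>z. snd (fst z) - snd (snd z))"
proof (rule aff_intro)
  fix z :: "pt \<times> pt"
  have "\<bar>snd (fst z) - snd (snd z)\<bar> \<le> \<bar>snd (fst z)\<bar> + \<bar>snd (snd z)\<bar>" by linarith
  then show "\<bar>snd (fst z) - snd (snd z)\<bar> \<le> 2 * Nn z" using fst_le[of z] by linarith
qed (auto simp: algebra_simps)
lemma aff_g4: "aff (\<lambda>z. snd (snd z) - snd (fst z))"
proof (rule aff_intro)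
  fix z :: "pt \<times> pt"
  have "\<bar>snd (snd z) - snd (fst z)\<bar> \<le> \<bar>snd (fst z)\<bar> + \<bar>snd (snd z)\<bar>" by linarith
  then show "\<bar>snd (snd z) - snd (fst z)\<bar> \<le> 2 * Nn z" using fst_le[of z] by linarith
qed (auto simp: algebra_simps)

lemma orderings_aff: "Q \<in> orderings \<Longrightarrow> \<exists>g. aff g \<and> Q = {z. g z \<ge> 1}"
  unfolding orderings_def ord_right_eq ord_left_eq ord_up_eq ord_down_eq
  using aff_g1 aff_g2 aff_g3 aff_g4 by blast

lemma orderings_F2: "Q \<in> orderings \<Longrightarrow> Q \<subseteq> F2"
  using F2_orderings by auto



lemma lip_glue:
  fixes f :: "real \<Rightarrow> pt \<times> pt"
  assumes "a \<le> b" "b \<le> c"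
    and L1: "\<forall>s\<in>{a..b}. \<forall>t\<in>{a..b}. Nn (f s - f t) \<le> \<bar>s - t\<bar>"
    and L2: "\<forall>s\<in>{b..c}. \<forall>t\<in>{b..c}. Nn (f s - f t) \<le> \<bar>s - t\<bar>"
  shows "\<forall>s\<in>{a..c}. \<forall>t\<in>{a..c}. Nn (f s - f t) \<le> \<bar>s - t\<bar>"
proof (intro ballI)
  fix s t assume s: "s \<in> {a..c}" and t: "t \<in> {a..c}"
  have tri: "Nn (f s - f t) \<le> Nn (f s - f b) + Nn (f b - f t)"
    using Nn_add[of "f s - f b" "f b - f t"] by simp
  have bb: "b \<in> {a..b}" "b \<in> {b..c}" using assms by auto
  consider "s \<le> b" "t \<le> b" | "s \<ge> b" "t \<ge> b" | "s \<le> b" "t \<ge> b" | "s \<ge> b" "t \<le> b" by linarith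
  then show "Nn (f s - f t) \<le> \<bar>s - t\<bar>"
  proof cases
    case 1 then show ?thesis using L1[rule_format, of s t] s t by auto
  next
    case 2 then show ?thesis using L2[rule_format, of s t] s t by auto
  next
    case 3
    have "Nn (f s - f b) \<le> \<bar>s - b\<bar>" using L1[rule_format, of s b] s 3 bb by auto
    moreover have "Nn (f b - f t) \<le> \<bar>b - t\<bar>" using L2[rule_format, of b t] t 3 bb by auto
    ultimately show ?thesis using tri 3 by linarith
  next
    case 4
    have "Nn (f s - f b) \<le> \<bar>s - b\<bar>" using L2[rule_format, of s b] s 4 bb by auto
    moreover have "Nn (f b - f t) \<le> \<bar>b - t\<bar>" using L1[rule_format, of b t] t 4 bb by auto
    ultimately show ?thesis using tri 4 by linarith
  qed
qed

lemma pl_leg_lip: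
  assumes "s \<in> {0..Nn (y - x)}" "t \<in> {0..Nn (y - x)}"
  shows "Nn ((x + (s / Nn (y - x)) *\<^sub>R (y - x)) - (x + (t / Nn (y - x)) *\<^sub>R (y - x))) \<le> \<bar>s - t\<bar>"
proof (cases "Nn (y - x) = 0")
  case True then show ?thesis by simp
next
  case False
  then have c: "Nn (y - x) > 0" using Nn_ge0[of "y - x"] by linarith
  have "(x + (s / Nn (y - x)) *\<^sub>R (y - x)) - (x + (t / Nn (y - x)) *\<^sub>R (y - x))
        = ((s - t) / Nn (y - x)) *\<^sub>R (y - x)" by (simp add: algebra_simps diff_divide_distrib)
  then show ?thesis using c by (simp add: Nn_scale abs_div)
qed

lemma pl_lip: "\<forall>s\<in>{0..ccost xs}. \<forall>t\<in>{0..ccost xs}. Nn (pl xs s - pl xs t) \<le> \<bar>s - t\<bar>"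
proof (induction xs rule: ccost.induct)
  case (1 x y r)
  define c where "c = Nn (y - x)"
  define R where "R = ccost (y # r)"
  have c0: "c \<ge> 0" unfolding c_def by (rule Nn_ge0)
  have R0: "R \<ge> 0" unfolding R_def by (rule ccost_ge0)
  have A: "\<forall>s\<in>{0..c}. \<forall>t\<in>{0..c}. Nn (pl (x # y # r) s - pl (x # y # r) t) \<le> \<bar>s - t\<bar>"
    using pl_leg_lip[of _ y x] unfolding c_def by (auto simp del: pl.simps simp: pl_first)
  have B: "\<forall>s\<in>{c..c + R}. \<forall>t\<in>{c..c + R}. Nn (pl (x # y # r) s - pl (x # y # r) t) \<le> \<bar>s - t\<bar>"
  proof (intro ballI)
    fix s t assume s: "s \<in> {c..c + R}" and t: "t \<in> {c..c + R}"
    have IH: "\<forall>s\<in>{0..R}. \<forall>t\<in>{0..R}. Nn (pl (y # r) s - pl (y # r) t) \<le> \<bar>s - t\<bar>"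
      using 1 unfolding R_def by simp
    have "Nn (pl (y # r) (s - c) - pl (y # r) (t - c)) \<le> \<bar>(s - c) - (t - c)\<bar>"
      using IH[rule_format, of "s - c" "t - c"] s t by auto
    then show "Nn (pl (x # y # r) s - pl (x # y # r) t) \<le> \<bar>s - t\<bar>"
      using s t by (simp del: pl.simps add: pl_shift c_def)
  qed
  have "\<forall>s\<in>{0..c + R}. \<forall>t\<in>{0..c + R}. Nn (pl (x # y # r) s - pl (x # y # r) t) \<le> \<bar>s - t\<bar>"
    by (rule lip_glue[OF c0 _ A B]) (use R0 in simp)
  then show ?case unfolding c_def R_def by simp
qed auto

lemma aff_conv:
  assumes "aff g" "0 \<le> u" "u \<le> 1"
  shows "g (x + u *\<^sub>R (y - x)) = (1 - u) * g x + u * g y"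
proof -
  have "g (x + u *\<^sub>R (y - x)) = g x + u * (g y - g x)" using assms(1) unfolding aff_def by blast
  then show ?thesis by (simp add: algebra_simps)
qed

lemma aff_ge1:
  assumes "aff g" "0 \<le> u" "u \<le> 1" "g x \<ge> 1" "g y \<ge> 1"
  shows "g (x + u *\<^sub>R (y - x)) \<ge> 1"
proof -
  have "(1 - u) * g x + u * g y \<ge> (1 - u) * 1 + u * 1"
    using assms by (intro add_mono mult_left_mono) auto
  then show ?thesis using aff_conv[OF assms(1-3)] by simp
qed

lemma aff_lt1:
  assumes "aff g" "0 \<le> u" "u \<le> 1" "g x < 1" "g y < 1"
  shows "g (x + u *\<^sub>R (y - x)) < 1"
proof (cases "u = 1")
  case True then show ?thesis using aff_conv[OF assms(1-3)] assms by simp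
next
  case False
  have "(1 - u) * g x < (1 - u) * 1" using assms False by (intro mult_strict_left_mono) auto
  moreover have "u * g y \<le> u * 1" using assms by (intro mult_left_mono) auto
  ultimately show ?thesis using aff_conv[OF assms(1-3)] by simp
qed

lemma frac01: "t \<in> {0..(c::real)} \<Longrightarrow> 0 \<le> t / c \<and> t / c \<le> 1"
proof (cases "c = 0")
  case False
  assume "t \<in> {0..c}"
  then have "c \<ge> 0" by auto
  then have "c > 0" using False by simp
  then show ?thesis using \<open>t \<in> {0..c}\<close> by (auto simp: divide_le_eq_1)
qed auto

lemma pl_F2: "xs \<noteq> [] \<Longrightarrow> chainok xs \<Longrightarrow> hd xs \<in> F2 \<Longrightarrow> t \<in> {0..ccost xs} \<Longrightarrow> pl xs t \<in> F2"
proof (induction xs arbitrary: t rule: ccost.induct)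
  case (1 x y r)
  show ?case
  proof (cases "t \<le> Nn (y - x)")
    case True
    obtain Q where Q: "Q \<in> orderings" "x \<in> Q" "y \<in> Q" using 1 by auto
    obtain g where g: "aff g" "Q = {z. g z \<ge> 1}" using orderings_aff[OF Q(1)] by auto
    have "g (x + (t / Nn (y - x)) *\<^sub>R (y - x)) \<ge> 1"
      using aff_ge1[OF g(1)] frac01[of t "Nn (y - x)"] True 1(5) Q g by auto
    then show ?thesis using True orderings_F2[OF Q(1)] g by auto
  next
    case False
    obtain Q where Q: "Q \<in> orderings" "x \<in> Q" "y \<in> Q" using 1 by auto
    then have "y \<in> F2" using orderings_F2 by auto
    then show ?thesis using 1 False by auto
  qed
qed auto



fun contig :: "(pt \<times> pt \<Rightarrow> real) \<Rightarrow> (pt \<times> pt) list \<Rightarrow> bool" where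
  "contig g (x # y # r) = ((g x \<ge> 1 \<and> g y < 1 \<longrightarrow> (\<forall>z\<in>set r. g z < 1)) \<and> contig g (y # r))"
| "contig g _ = True"

lemma aff_leg: "aff g \<Longrightarrow> g (x + u *\<^sub>R (y - x)) = g x + u * (g y - g x)"
  unfolding aff_def by blast

lemma pl_mem: "xs \<noteq> [] \<Longrightarrow> aff g \<Longrightarrow> t \<in> {0..ccost xs} \<Longrightarrow> g (pl xs t) \<ge> 1 \<Longrightarrow> \<exists>z\<in>set xs. g z \<ge> 1"
proof (induction xs arbitrary: t rule: ccost.induct)
  case (1 x y r)
  show ?case
  proof (cases "t \<le> Nn (y - x)")
    case True
    show ?thesis
    proof (rule ccontr)
      assume "\<not> ?thesis"
      then have "g x < 1" "g y < 1" by auto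
      then have "g (x + (t / Nn (y - x)) *\<^sub>R (y - x)) < 1"
        using aff_lt1[OF 1(3)] frac01[of t "Nn (y - x)"] True 1(4) by auto
      then show False using 1(5) True by simp
    qed
  next
    case False
    then have "\<exists>z\<in>set (y # r). g z \<ge> 1" using 1 by (intro 1(1)[of "t - Nn (y - x)"]) auto
    then show ?thesis by auto
  qed
qed auto

lemma lin_between:
  fixes h :: "real \<Rightarrow> real"
  assumes "\<And>t. a \<le> t \<Longrightarrow> t \<le> b \<Longrightarrow> h t = p + t * k" "h a \<ge> 1" "h b \<ge> 1" "a \<le> u" "u \<le> b"
  shows "h u \<ge> 1"
proof (cases "k \<ge> 0")
  case True
  then have "a * k \<le> u * k" using assms by (intro mult_right_mono) auto
  then show ?thesis using assms by simp
next
  case False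
  then have "u * k \<ge> b * k" using assms by (intro mult_right_mono_neg) auto
  then show ?thesis using assms(1)[of b] assms(1)[of u] assms by simp
qed

lemma pl_interval:
  "xs \<noteq> [] \<Longrightarrow> aff g \<Longrightarrow> contig g xs \<Longrightarrow> is_interval {t\<in>{0..ccost xs}. g (pl xs t) \<ge> 1}"
proof (induction xs rule: ccost.induct)
  case (1 x y r)
  define c where "c = Nn (y - x)"
  define R where "R = ccost (y # r)"
  define S where "S = {t\<in>{0..ccost (x # y # r)}. g (pl (x # y # r) t) \<ge> 1}"
  have c0: "c \<ge> 0" unfolding c_def by (rule Nn_ge0)
  have R0: "R \<ge> 0" unfolding R_def by (rule ccost_ge0)
  have cc: "ccost (x # y # r) = c + R" unfolding c_def R_def by simp
  have IH: "is_interval {t\<in>{0..R}. g (pl (y # r) t) \<ge> 1}"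
    using 1 unfolding R_def by simp
  have leg: "g (pl (x # y # r) t) = g x + t * ((g y - g x) / c)" if "t \<le> c" for t
    using that aff_leg[OF 1(3), of x "t / c" y] unfolding c_def by simp
  have sh: "pl (x # y # r) t = pl (y # r) (t - c)" if "t \<ge> c" for t
    using that pl_shift unfolding c_def by blast
  have I: "u \<in> S" if "a \<in> S" "b \<in> S" "a \<le> u" "u \<le> b" "b \<le> c" for a b u
  proof -
    have "g (pl (x # y # r) u) \<ge> 1"
      by (rule lin_between[where h="\<lambda>t. g (pl (x # y # r) t)" and a=a and b=b and
            p="g x" and k="(g y - g x) / c"])
        (use that leg S_def in \<open>auto simp del: pl.simps\<close>)
    then show ?thesis using that unfolding S_def by auto
  qed
  have II: "u \<in> S" if "a \<in> S" "b \<in> S" "a \<le> u" "u \<le> b" "c \<le> a" for a b u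
  proof -
    have "a - c \<in> {t\<in>{0..R}. g (pl (y # r) t) \<ge> 1}" "b - c \<in> {t\<in>{0..R}. g (pl (y # r) t) \<ge> 1}"
      using that sh[of a] sh[of b] cc unfolding S_def by auto
    then have "u - c \<in> {t\<in>{0..R}. g (pl (y # r) t) \<ge> 1}"
      using IH that unfolding is_interval_1 by (meson diff_right_mono)
    then show ?thesis using that sh[of u] cc unfolding S_def by auto
  qed
  have "is_interval S"
    unfolding is_interval_1
  proof (intro ballI allI impI)
    fix a b u assume a: "a \<in> S" and b: "b \<in> S" and u: "a \<le> u \<and> u \<le> b"
    consider "b \<le> c" | "c \<le> a" | "a < c" "c < b" by linarith
    then show "u \<in> S"
    proof cases
      case 1 then show ?thesis using I a b u by blast
    next
      case 2 then show ?thesis using II a b u by blast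
    next
      case 3
      show ?thesis
      proof (cases "g y \<ge> 1")
        case True
        have "pl (x # y # r) c = y" using sh[of c] pl_0[of "y # r"] by simp
        then have cS: "c \<in> S" using True c0 R0 cc unfolding S_def by auto
        show ?thesis
        proof (cases "u \<le> c")
          case True then show ?thesis using I[OF a cS] u by auto
        next
          case False then show ?thesis using II[OF cS b] u by auto
        qed
      next
        case False
        have "b - c \<in> {0..R}" "g (pl (y # r) (b - c)) \<ge> 1"
          using b 3 sh[of b] cc unfolding S_def by auto
        then obtain z where z: "z \<in> set (y # r)" "g z \<ge> 1"
          using pl_mem[OF _ 1(3)] unfolding R_def by blast
        then have "z \<in> set r" using False by auto
        then have gx: "g x < 1" using 1(4) z False by auto
        have "g (pl (x # y # r) a) < 1"
          using aff_lt1[OF 1(3), of "a / c" x y] frac01[of a c] a 3 gx False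
          unfolding S_def c_def by auto
        then show ?thesis using a unfolding S_def by auto
      qed
    qed
  qed
  then show ?case unfolding S_def .
qed (auto simp: is_interval_1)



lemma polyset_eq: "ps \<noteq> [] \<Longrightarrow>
  polyset ps = set ps \<union> (\<Union>i\<in>{i. Suc i < length ps}. closed_segment (ps ! i) (ps ! Suc i))"
proof (induction ps rule: polyset.induct)
  case (1 p q r)
  have idx: "{i. Suc i < length (p # q # r)} = insert 0 (Suc ` {i. Suc i < length (q # r)})"
    by (auto simp: image_iff) (metis Suc_less_eq lessI not0_implies_Suc)
  have "polyset (p # q # r) = closed_segment p q \<union> polyset (q # r)" by simp
  also have "\<dots> = closed_segment p q \<union> (set (q # r) \<union>
      (\<Union>i\<in>{i. Suc i < length (q # r)}. closed_segment ((q # r) ! i) ((q # r) ! Suc i)))"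
    using 1 by simp
  also have "\<dots> = set (p # q # r) \<union>
      (\<Union>i\<in>{i. Suc i < length (p # q # r)}. closed_segment ((p # q # r) ! i) ((p # q # r) ! Suc i))"
    unfolding idx by auto
  finally show ?case .
qed auto

lemma polyset_chain: "ps \<noteq> [] \<Longrightarrow> polygonal_chain (polyset ps)"
  unfolding polygonal_chain_def using polyset_eq by blast

lemma div_image: "(c::real) > 0 \<Longrightarrow> (\<lambda>t. t / c) ` {0..c} = {0..1}"
proof
  assume c: "c > 0"
  show "(\<lambda>t. t / c) ` {0..c} \<subseteq> {0..1}" using c by (auto simp: divide_le_eq_1)
  show "{0..1} \<subseteq> (\<lambda>t. t / c) ` {0..c}"
  proof
    fix u :: real assume u: "u \<in> {0..1}"
    have "u * c \<in> {0..c}" using u c by (auto simp: mult_le_cancel_right1)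
    moreover have "u = (u * c) / c" using c by simp
    ultimately show "u \<in> (\<lambda>t. t / c) ` {0..c}" by blast
  qed
qed

lemma seg_image:
  fixes p q :: pt
  assumes "c > 0"
  shows "(\<lambda>t. p + (t / c) *\<^sub>R (q - p)) ` {0..c} = closed_segment p q"
proof -
  have eq: "(\<lambda>t. p + (t / c) *\<^sub>R (q - p)) = (\<lambda>u. (1 - u) *\<^sub>R p + u *\<^sub>R q) \<circ> (\<lambda>t. t / c)"
    by (auto simp: algebra_simps)
  have "(\<lambda>t. p + (t / c) *\<^sub>R (q - p)) ` {0..c} = ((\<lambda>u. (1 - u) *\<^sub>R p + u *\<^sub>R q) \<circ> (\<lambda>t. t / c)) ` {0..c}"
    by (simp only: eq)
  also have "\<dots> = (\<lambda>u. (1 - u) *\<^sub>R p + u *\<^sub>R q) ` ((\<lambda>t. t / c) ` {0..c})"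
    by (simp only: image_comp)
  also have "\<dots> = (\<lambda>u. (1 - u) *\<^sub>R p + u *\<^sub>R q) ` {0..1}"
    by (simp only: div_image[OF assms])
  finally show ?thesis unfolding closed_segment_image_interval .
qed

lemma pl_image:
  assumes "xs \<noteq> []"
    and lin: "\<And>a b. \<pi> (a + b) = \<pi> a + \<pi> b" "\<And>a b. \<pi> (a - b) = \<pi> a - \<pi> b"
      "\<And>u a. \<pi> (u *\<^sub>R a) = u *\<^sub>R \<pi> a"
  shows "(\<lambda>t. \<pi> (pl xs t)) ` {0..ccost xs} = polyset (map \<pi> xs)"
  using assms(1)
proof (induction xs rule: ccost.induct)
  case (1 x y r)
  define c where "c = Nn (y - x)"
  define R where "R = ccost (y # r)"
  have c0: "c \<ge> 0" unfolding c_def by (rule Nn_ge0)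
  have R0: "R \<ge> 0" unfolding R_def by (rule ccost_ge0)
  have cc: "ccost (x # y # r) = c + R" unfolding c_def R_def by simp
  have IH: "(\<lambda>t. \<pi> (pl (y # r) t)) ` {0..R} = polyset (map \<pi> (y # r))"
    using 1 unfolding R_def by simp
  have sh: "pl (x # y # r) t = pl (y # r) (t - c)" if "t \<ge> c" for t
    using that pl_shift unfolding c_def by blast
  have ivl: "{0..c + R} = {0..c} \<union> {c..c + R}" using c0 R0 by auto
  have A: "(\<lambda>t. \<pi> (pl (x # y # r) t)) ` {0..c} = closed_segment (\<pi> x) (\<pi> y)"
  proof (cases "c = 0")
    case True
    then have "y = x" unfolding c_def using Nn_zero[of "y - x"] by simp
    then show ?thesis using True by (auto simp: c_def)
  next
    case False
    then have cp: "c > 0" using c0 by simp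
    have "(\<lambda>t. \<pi> (pl (x # y # r) t)) ` {0..c} = (\<lambda>t. \<pi> x + (t / c) *\<^sub>R (\<pi> y - \<pi> x)) ` {0..c}"
      by (rule image_cong) (auto simp: c_def lin)
    then show ?thesis using seg_image[OF cp] by simp
  qed
  have B: "(\<lambda>t. \<pi> (pl (x # y # r) t)) ` {c..c + R} = polyset (map \<pi> (y # r))"
  proof -
    have "(\<lambda>t. \<pi> (pl (x # y # r) t)) ` {c..c + R} = (\<lambda>t. \<pi> (pl (y # r) t)) ` ((\<lambda>t. t - c) ` {c..c + R})"
      unfolding image_comp by (rule image_cong) (auto simp del: pl.simps simp: sh)
    also have "(\<lambda>t. t - c) ` {c..c + R} = {0..R}" by simp
    finally show ?thesis using IH by simp
  qed
  show ?case unfolding cc ivl image_Un A B by simp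
qed auto



lemma orderings_finite: "finite orderings" by (simp add: orderings_def)
lemma orderings_card: "card orderings \<le> 4"
proof -
  have "orderings = set [ord_right, ord_left, ord_up, ord_down]" by (simp add: orderings_def)
  then show ?thesis using card_length[of "[ord_right, ord_left, ord_up, ord_down]"] by simp
qed

lemma lip_cont:
  fixes h :: "real \<Rightarrow> real"
  assumes "\<forall>s\<in>S. \<forall>t\<in>S. \<bar>h s - h t\<bar> \<le> 2 * \<bar>s - t\<bar>"
  shows "continuous_on S h"
  unfolding continuous_on_iff
proof (intro ballI allI impI)
  fix x e assume x: "x \<in> S" and e: "(0::real) < e"
  show "\<exists>d>0. \<forall>x'\<in>S. dist x' x < d \<longrightarrow> dist (h x') (h x) < e"
  proof (intro exI[of _ "e / 2"] conjI ballI impI)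
    fix x' assume "x' \<in> S" "dist x' x < e / 2"
    then show "dist (h x') (h x) < e" using assms x by (force simp: dist_real_def)
  qed (use e in simp)
qed

locale lbpath =
  fixes \<gamma> :: "real \<Rightarrow> pt \<times> pt" and s0 s1 :: real
  assumes le: "s0 \<le> s1"
    and lip: "\<forall>s\<in>{s0..s1}. \<forall>t\<in>{s0..s1}. Nn (\<gamma> s - \<gamma> t) \<le> \<bar>s - t\<bar>"
    and inF: "\<forall>t\<in>{s0..s1}. \<gamma> t \<in> F2"
begin

lemma closed_pre:
  assumes "Q \<in> orderings" "s0 \<le> a" "b \<le> s1"
  shows "closed {t\<in>{a..b}. \<gamma> t \<in> Q}"
proof -
  obtain g where g: "aff g" "Q = {z. g z \<ge> 1}" using orderings_aff[OF assms(1)] by auto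
  have "\<forall>s\<in>{a..b}. \<forall>t\<in>{a..b}. \<bar>g (\<gamma> s) - g (\<gamma> t)\<bar> \<le> 2 * \<bar>s - t\<bar>"
  proof (intro ballI)
    fix s t assume "s \<in> {a..b}" "t \<in> {a..b}"
    then have "Nn (\<gamma> s - \<gamma> t) \<le> \<bar>s - t\<bar>" using lip assms by auto
    then have "2 * Nn (\<gamma> s - \<gamma> t) \<le> 2 * \<bar>s - t\<bar>" by simp
    moreover have "\<bar>g (\<gamma> s) - g (\<gamma> t)\<bar> \<le> 2 * Nn (\<gamma> s - \<gamma> t)" using g(1) unfolding aff_def by blast
    ultimately show "\<bar>g (\<gamma> s) - g (\<gamma> t)\<bar> \<le> 2 * \<bar>s - t\<bar>" by linarith
  qed
  then have "continuous_on {a..b} (\<lambda>t. g (\<gamma> t))" by (rule lip_cont)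
  then have "closed ({a..b} \<inter> (\<lambda>t. g (\<gamma> t)) -` {1..})"
    by (rule continuous_closed_preimage) auto
  moreover have "{t\<in>{a..b}. \<gamma> t \<in> Q} = {a..b} \<inter> (\<lambda>t. g (\<gamma> t)) -` {1..}" using g by auto
  ultimately show ?thesis by simp
qed

lemma closed_pre_U:
  assumes "Us \<subseteq> orderings" "s0 \<le> a" "b \<le> s1"
  shows "closed {t\<in>{a..b}. \<gamma> t \<in> \<Union>Us}"
proof -
  have "{t\<in>{a..b}. \<gamma> t \<in> \<Union>Us} = (\<Union>Q\<in>Us. {t\<in>{a..b}. \<gamma> t \<in> Q})" by auto
  moreover have "finite Us" using assms(1) orderings_finite finite_subset by blast
  ultimately show ?thesis using closed_pre assms by (auto intro!: closed_UN)
qed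

lemma lb_chain:
  "W \<subseteq> orderings \<Longrightarrow> Q \<in> orderings - W \<Longrightarrow> \<tau> \<in> {s0..s1} \<Longrightarrow> \<gamma> \<tau> \<in> Q \<Longrightarrow>
   (\<forall>t\<in>{\<tau><..s1}. \<gamma> t \<notin> \<Union>W) \<Longrightarrow>
   \<exists>xs. xs \<noteq> [] \<and> hd xs = \<gamma> \<tau> \<and> last xs = \<gamma> s1 \<and> chainok xs \<and> ccost xs \<le> s1 - \<tau> \<and>
        length xs \<le> card (orderings - W) + 1"
proof (induction "card (orderings - W)" arbitrary: W Q \<tau> rule: less_induct)
  case less
  note W = less.prems(1) and Q = less.prems(2) and tau = less.prems(3) and gQ = less.prems(4)
    and notW = less.prems(5)
  have fin: "finite (orderings - W)" using orderings_finite by simp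
  have cardpos: "card (orderings - W) \<ge> 1" using Q fin
    by (metis One_nat_def Suc_leI card_gt_0_iff empty_iff)
  define T where "T = {t\<in>{\<tau>..s1}. \<gamma> t \<in> Q}"
  have Tcl: "closed T" unfolding T_def using closed_pre[of Q \<tau> s1] Q tau by auto
  have Tb: "bounded T" unfolding T_def by (rule bounded_subset[of "{\<tau>..s1}"]) auto
  have Tne: "\<tau> \<in> T" unfolding T_def using tau gQ by auto
  obtain \<tau>' where t': "\<tau>' \<in> T" "\<forall>t\<in>T. t \<le> \<tau>'"
    using compact_attains_sup[of T] Tcl Tb Tne compact_eq_bounded_closed by blast
  have t'r: "\<tau> \<le> \<tau>'" "\<tau>' \<le> s1" "\<gamma> \<tau>' \<in> Q" using t' unfolding T_def by auto
  have lipst: "Nn (\<gamma> b - \<gamma> a) \<le> b - a" if "s0 \<le> a" "a \<le> b" "b \<le> s1" for a b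
    using lip[rule_format, of b a] that by auto
  show ?case
  proof (cases "\<tau>' = s1")
    case True
    have "Nn (\<gamma> s1 - \<gamma> \<tau>) \<le> s1 - \<tau>" using lipst[of \<tau> s1] tau by auto
    then show ?thesis using True t'r Q gQ cardpos
      by (intro exI[of _ "[\<gamma> \<tau>, \<gamma> s1]"]) auto
  next
    case False
    then have lt: "\<tau>' < s1" using t'r by simp
    define W' where "W' = insert Q W"
    have nW': "\<gamma> t \<notin> \<Union>W'" if "t \<in> {\<tau>'<..s1}" for t
    proof -
      have "t \<notin> T" using t' that by force
      then have "\<gamma> t \<notin> Q" using that t'r unfolding T_def by auto
      moreover have "\<gamma> t \<notin> \<Union>W" using notW that t'r by auto
      ultimately show ?thesis unfolding W'_def by auto
    qed
    have after: "\<gamma> t \<in> \<Union>(orderings - W')" if "t \<in> {\<tau>'<..s1}" for t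
    proof -
      have "\<gamma> t \<in> F2" using inF that t'r tau by auto
      then show ?thesis using nW'[OF that] unfolding F2_orderings by auto
    qed
    define C where "C = {t\<in>{\<tau>'..s1}. \<gamma> t \<in> \<Union>(orderings - W')}"
    have Ccl: "closed C" unfolding C_def using closed_pre_U[of "orderings - W'" \<tau>' s1] t'r tau by auto
    have "{\<tau>'<..s1} \<subseteq> C" unfolding C_def using after by auto
    then have "closure {\<tau>'<..s1} \<subseteq> C" using Ccl closure_minimal by blast
    then have "\<tau>' \<in> C" using lt by auto
    then obtain Q' where Q': "Q' \<in> orderings - W'" "\<gamma> \<tau>' \<in> Q'" unfolding C_def by auto
    have W'sub: "W' \<subseteq> orderings" using W Q unfolding W'_def by auto
    have eqd: "orderings - W' = (orderings - W) - {Q}" unfolding W'_def by auto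
    have cardlt: "card (orderings - W') < card (orderings - W)"
      unfolding eqd using Q fin cardpos by (simp add: card_Diff1_less)
    have cardeq: "card (orderings - W') + 1 = card (orderings - W)"
      unfolding eqd using Q fin cardpos by (simp add: card_Diff_singleton)
    have notW': "\<forall>t\<in>{\<tau>'<..s1}. \<gamma> t \<notin> \<Union>W'" using nW' by blast
    have tau': "\<tau>' \<in> {s0..s1}" using t'r tau by auto
    obtain ys where ys: "ys \<noteq> []" "hd ys = \<gamma> \<tau>'" "last ys = \<gamma> s1" "chainok ys"
      "ccost ys \<le> s1 - \<tau>'" "length ys \<le> card (orderings - W') + 1"
      using less.hyps[OF cardlt W'sub Q'(1) tau' Q'(2) notW'] by blast
    obtain y r where yr: "ys = y # r" using ys(1) by (cases ys) auto
    have "Nn (\<gamma> \<tau>' - \<gamma> \<tau>) \<le> \<tau>' - \<tau>" using lipst[of \<tau> \<tau>'] tau t'r by auto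
    then have "ccost (\<gamma> \<tau> # ys) \<le> s1 - \<tau>" using ys yr by simp
    moreover have "chainok (\<gamma> \<tau> # ys)" using ys yr Q gQ t'r by auto
    moreover have "length (\<gamma> \<tau> # ys) \<le> card (orderings - W) + 1" using ys cardeq by simp
    ultimately show ?thesis using ys yr by (intro exI[of _ "\<gamma> \<tau> # ys"]) auto
  qed
qed

lemma lb_chain5:
  "\<exists>xs. xs \<noteq> [] \<and> hd xs = \<gamma> s0 \<and> last xs = \<gamma> s1 \<and> chainok xs \<and> ccost xs \<le> s1 - s0 \<and> length xs \<le> 5"
proof -
  obtain Q where Q: "Q \<in> orderings" "\<gamma> s0 \<in> Q" using inF[rule_format, of s0] le F2_orderings by auto
  obtain xs where "xs \<noteq> []" "hd xs = \<gamma> s0" "last xs = \<gamma> s1" "chainok xs" "ccost xs \<le> s1 - s0"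
    "length xs \<le> card (orderings - {}) + 1"
    using lb_chain[of "{}" Q s0] Q le by auto
  then show ?thesis using orderings_card by (intro exI[of _ xs]) auto
qed

end

lemma pad1: "xs \<noteq> [] \<Longrightarrow> chainok xs \<Longrightarrow> last xs \<in> F2 \<Longrightarrow>
   chainok (xs @ [last xs]) \<and> ccost (xs @ [last xs]) = ccost xs"
proof (induction xs rule: ccost.induct)
qed (use F2_orderings in auto)

lemma padn: "xs \<noteq> [] \<Longrightarrow> chainok xs \<Longrightarrow> last xs \<in> F2 \<Longrightarrow> length xs \<le> n \<Longrightarrow>
   \<exists>ys. length ys = n \<and> hd ys = hd xs \<and> last ys = last xs \<and> chainok ys \<and> ccost ys = ccost xs"
proof (induction "n - length xs" arbitrary: xs)
  case 0 then show ?case by (intro exI[of _ xs]) auto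
next
  case (Suc k)
  have p: "chainok (xs @ [last xs])" "ccost (xs @ [last xs]) = ccost xs" using pad1 Suc.prems by auto
  have "k = n - length (xs @ [last xs])" using Suc.hyps(2) by simp
  from Suc.hyps(1)[OF this] p Suc.prems Suc.hyps(2)
  show ?case by (cases xs) auto
qed



definition L5 :: "pt \<times> pt \<Rightarrow> pt \<times> pt \<Rightarrow> (pt \<times> pt) \<times> (pt \<times> pt) \<times> (pt \<times> pt) \<Rightarrow> (pt \<times> pt) list" where
  "L5 A B p = [A, fst p, fst (snd p), snd (snd p), B]"

lemma share_iff: "(\<exists>Q\<in>orderings. u \<in> Q \<and> v \<in> Q) \<longleftrightarrow>
   (1 \<le> fst (fst u) - fst (snd u) \<and> 1 \<le> fst (fst v) - fst (snd v)) \<or>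
   (1 \<le> fst (snd u) - fst (fst u) \<and> 1 \<le> fst (snd v) - fst (fst v)) \<or>
   (1 \<le> snd (fst u) - snd (snd u) \<and> 1 \<le> snd (fst v) - snd (snd v)) \<or>
   (1 \<le> snd (snd u) - snd (fst u) \<and> 1 \<le> snd (snd v) - snd (fst v))"
  by (auto simp: orderings_def ord_right_eq ord_left_eq ord_up_eq ord_down_eq)

lemma closed_share:
  fixes F G :: "'a::topological_space \<Rightarrow> pt \<times> pt"
  assumes "continuous_on UNIV F" "continuous_on UNIV G"
  shows "closed {p. \<exists>Q\<in>orderings. F p \<in> Q \<and> G p \<in> Q}"
  unfolding share_iff
  by (intro closed_Collect_conj closed_Collect_disj closed_Collect_le continuous_intros assms)

lemma S_closed: "closed {p. chainok (L5 A B p)}"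
proof -
  have "{p. chainok (L5 A B p)} =
     {p. \<exists>Q\<in>orderings. (\<lambda>p. A) p \<in> Q \<and> fst p \<in> Q} \<inter>
     {p. \<exists>Q\<in>orderings. fst p \<in> Q \<and> fst (snd p) \<in> Q} \<inter>
     {p. \<exists>Q\<in>orderings. fst (snd p) \<in> Q \<and> snd (snd p) \<in> Q} \<inter>
     {p. \<exists>Q\<in>orderings. snd (snd p) \<in> Q \<and> (\<lambda>p. B) p \<in> Q}"
    by (auto simp: L5_def)
  then show ?thesis
    by (simp only:) (intro closed_Int closed_share continuous_intros)
qed

lemma Nn_cont: "continuous_on UNIV F \<Longrightarrow> continuous_on UNIV (\<lambda>p. Nn (F p))"
  unfolding Nn_def l1n_def by (intro continuous_intros)

lemma f_cont: "continuous_on UNIV (\<lambda>p. ccost (L5 A B p))"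
  unfolding L5_def by (simp, intro continuous_intros Nn_cont)

lemma norm_Nn: "norm (z :: pt \<times> pt) \<le> 2 * Nn z"
proof -
  have a: "norm (p :: pt) \<le> l1n p" for p
    using norm_Pair_le[of "fst p" "snd p"] by (simp add: l1n_def)
  have "norm z \<le> norm (fst z) + norm (snd z)" using norm_Pair_le[of "fst z" "snd z"] by simp
  also have "\<dots> \<le> l1n (fst z) + l1n (snd z)" using a by (intro add_mono) auto
  also have "\<dots> \<le> 2 * Nn z" using Nn_fst[of z] Nn_snd[of z] by linarith
  finally show ?thesis .
qed

lemma min_exists:
  assumes "p0 \<in> {p. chainok (L5 A B p)}"
  shows "\<exists>p\<in>{p. chainok (L5 A B p)}. \<forall>q\<in>{p. chainok (L5 A B p)}. ccost (L5 A B p) \<le> ccost (L5 A B q)"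
proof -
  define S where "S = {p. chainok (L5 A B p)}"
  define f where "f = (\<lambda>p. ccost (L5 A B p))"
  define K where "K = S \<inter> {p. f p \<le> f p0}"
  have fc: "continuous_on UNIV f" unfolding f_def by (rule f_cont)
  have Kcl: "closed K" unfolding K_def S_def
    by (intro closed_Int S_closed closed_Collect_le fc continuous_intros)
  have bnd: "norm p \<le> (norm A + 2 * f p0) + (norm A + 2 * f p0) + (norm A + 2 * f p0)" if "p \<in> K" for p
  proof -
    obtain x1 x2 x3 where p: "p = (x1, x2, x3)" by (cases p) auto
    have fp: "f p \<le> f p0" using that unfolding K_def by auto
    have ff: "f p = Nn (x1 - A) + Nn (x2 - x1) + Nn (x3 - x2) + Nn (B - x3)"
      unfolding f_def L5_def p by simp
    have t1: "Nn (x2 - A) \<le> Nn (x1 - A) + Nn (x2 - x1)" by (rule Nn_tri)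
    have t2: "Nn (x3 - A) \<le> Nn (x2 - A) + Nn (x3 - x2)" by (rule Nn_tri)
    have g: "Nn (B - x3) \<ge> 0" "Nn (x1 - A) \<ge> 0" "Nn (x2 - x1) \<ge> 0" "Nn (x3 - x2) \<ge> 0"
      by (auto intro: Nn_ge0)
    have e1: "Nn (x1 - A) \<le> f p0" and e2: "Nn (x2 - A) \<le> f p0" and e3: "Nn (x3 - A) \<le> f p0"
      using fp ff t1 t2 g by linarith+
    have nx: "norm x \<le> norm A + 2 * f p0" if "Nn (x - A) \<le> f p0" for x
    proof -
      have "norm x \<le> norm A + norm (x - A)" by (metis add_diff_cancel_left' norm_triangle_ineq add.commute diff_add_cancel)
      also have "\<dots> \<le> norm A + 2 * Nn (x - A)" using norm_Nn[of "x - A"] by simp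
      finally show ?thesis using that by linarith
    qed
    have "norm p \<le> norm x1 + (norm x2 + norm x3)"
      unfolding p using norm_Pair_le[of x1 "(x2, x3)"] norm_Pair_le[of x2 x3] by simp
    then show ?thesis using nx[OF e1] nx[OF e2] nx[OF e3] by linarith
  qed
  have Kb: "bounded K" unfolding bounded_iff using bnd by blast
  have Kne: "p0 \<in> K" using assms unfolding K_def S_def by auto
  obtain p where p: "p \<in> K" "\<forall>q\<in>K. f p \<le> f q"
    using continuous_attains_inf[of K f] Kcl Kb Kne compact_eq_bounded_closed
      continuous_on_subset[OF fc] by blast
  have "\<forall>q\<in>S. f p \<le> f q"
  proof
    fix q assume "q \<in> S"
    show "f p \<le> f q"
    proof (cases "f q \<le> f p0")
      case True then show ?thesis using p \<open>q \<in> S\<close> unfolding K_def by auto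
    next
      case False then show ?thesis using p(2) Kne by force
    qed
  qed
  moreover have "p \<in> S" using p(1) unfolding K_def by blast
  ultimately show ?thesis unfolding S_def f_def by blast
qed



lemma corners:
  "(((1::real),(1::real)),((0::real),(0::real))) \<in> ord_right" "(((1::real),(1::real)),((0::real),(0::real))) \<in> ord_up"
  "(((-1::real),(1::real)),((0::real),(0::real))) \<in> ord_left" "(((-1::real),(1::real)),((0::real),(0::real))) \<in> ord_up"
  "(((1::real),(-1::real)),((0::real),(0::real))) \<in> ord_right" "(((1::real),(-1::real)),((0::real),(0::real))) \<in> ord_down"
  "(((-1::real),(-1::real)),((0::real),(0::real))) \<in> ord_left" "(((-1::real),(-1::real)),((0::real),(0::real))) \<in> ord_down"
  by (auto simp: ord_right_eq ord_left_eq ord_up_eq ord_down_eq)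

lemma S_help:
  assumes "Qa \<in> orderings" "Qb \<in> orderings" "Qc \<in> orderings" "A \<in> Qa" "B \<in> Qb"
    "p \<in> Qa" "p \<in> Qc" "q \<in> Qc" "q \<in> Qb"
  shows "\<exists>p. chainok (L5 A B p)"
proof -
  have "chainok (L5 A B (p, q, B))" using assms unfolding L5_def by auto
  then show ?thesis by blast
qed

lemma ord_cases: "Q \<in> orderings \<Longrightarrow> (Q = ord_right \<Longrightarrow> P) \<Longrightarrow> (Q = ord_left \<Longrightarrow> P) \<Longrightarrow>
  (Q = ord_up \<Longrightarrow> P) \<Longrightarrow> (Q = ord_down \<Longrightarrow> P) \<Longrightarrow> P"
  unfolding orderings_def by blast

lemma S_nonempty:
  assumes "A \<in> F2" "B \<in> F2"
  shows "\<exists>p. chainok (L5 A B p)"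
proof -
  obtain Qa where Qa: "Qa \<in> orderings" "A \<in> Qa" using assms F2_orderings by auto
  obtain Qb where Qb: "Qb \<in> orderings" "B \<in> Qb" using assms F2_orderings by auto
  have oo: "ord_right \<in> orderings" "ord_left \<in> orderings" "ord_up \<in> orderings" "ord_down \<in> orderings"
    by (auto simp: orderings_def)
  show ?thesis
  proof (rule ord_cases[OF Qa(1)])
    assume ea: "Qa = ord_right"
    show ?thesis
    proof (rule ord_cases[OF Qb(1)])
      assume eb: "Qb = ord_right"
      show ?thesis
        by (rule S_help[OF oo(1) oo(1) oo(3) Qa(2)[unfolded ea] Qb(2)[unfolded eb] corners(1) corners(2) corners(2) corners(1)])
    next
      assume eb: "Qb = ord_left"
      show ?thesis
        by (rule S_help[OF oo(1) oo(2) oo(3) Qa(2)[unfolded ea] Qb(2)[unfolded eb] corners(1) corners(2) corners(4) corners(3)])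
    next
      assume eb: "Qb = ord_up"
      show ?thesis
        by (rule S_help[OF oo(1) oo(3) oo(3) Qa(2)[unfolded ea] Qb(2)[unfolded eb] corners(1) corners(2) corners(2) corners(2)])
    next
      assume eb: "Qb = ord_down"
      show ?thesis
        by (rule S_help[OF oo(1) oo(4) oo(4) Qa(2)[unfolded ea] Qb(2)[unfolded eb] corners(5) corners(6) corners(6) corners(6)])
    qed
  next
    assume ea: "Qa = ord_left"
    show ?thesis
    proof (rule ord_cases[OF Qb(1)])
      assume eb: "Qb = ord_right"
      show ?thesis
        by (rule S_help[OF oo(2) oo(1) oo(3) Qa(2)[unfolded ea] Qb(2)[unfolded eb] corners(3) corners(4) corners(2) corners(1)])
    next
      assume eb: "Qb = ord_left"
      show ?thesis
        by (rule S_help[OF oo(2) oo(2) oo(3) Qa(2)[unfolded ea] Qb(2)[unfolded eb] corners(3) corners(4) corners(4) corners(3)])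
    next
      assume eb: "Qb = ord_up"
      show ?thesis
        by (rule S_help[OF oo(2) oo(3) oo(3) Qa(2)[unfolded ea] Qb(2)[unfolded eb] corners(3) corners(4) corners(4) corners(4)])
    next
      assume eb: "Qb = ord_down"
      show ?thesis
        by (rule S_help[OF oo(2) oo(4) oo(4) Qa(2)[unfolded ea] Qb(2)[unfolded eb] corners(7) corners(8) corners(8) corners(8)])
    qed
  next
    assume ea: "Qa = ord_up"
    show ?thesis
    proof (rule ord_cases[OF Qb(1)])
      assume eb: "Qb = ord_right"
      show ?thesis
        by (rule S_help[OF oo(3) oo(1) oo(3) Qa(2)[unfolded ea] Qb(2)[unfolded eb] corners(2) corners(2) corners(2) corners(1)])
    next
      assume eb: "Qb = ord_left"
      show ?thesis
        by (rule S_help[OF oo(3) oo(2) oo(3) Qa(2)[unfolded ea] Qb(2)[unfolded eb] corners(4) corners(4) corners(4) corners(3)])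
    next
      assume eb: "Qb = ord_up"
      show ?thesis
        by (rule S_help[OF oo(3) oo(3) oo(1) Qa(2)[unfolded ea] Qb(2)[unfolded eb] corners(2) corners(1) corners(1) corners(2)])
    next
      assume eb: "Qb = ord_down"
      show ?thesis
        by (rule S_help[OF oo(3) oo(4) oo(1) Qa(2)[unfolded ea] Qb(2)[unfolded eb] corners(2) corners(1) corners(5) corners(6)])
    qed
  next
    assume ea: "Qa = ord_down"
    show ?thesis
    proof (rule ord_cases[OF Qb(1)])
      assume eb: "Qb = ord_right"
      show ?thesis
        by (rule S_help[OF oo(4) oo(1) oo(4) Qa(2)[unfolded ea] Qb(2)[unfolded eb] corners(6) corners(6) corners(6) corners(5)])
    next
      assume eb: "Qb = ord_left"
      show ?thesis
        by (rule S_help[OF oo(4) oo(2) oo(4) Qa(2)[unfolded ea] Qb(2)[unfolded eb] corners(8) corners(8) corners(8) corners(7)])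
    next
      assume eb: "Qb = ord_up"
      show ?thesis
        by (rule S_help[OF oo(4) oo(3) oo(1) Qa(2)[unfolded ea] Qb(2)[unfolded eb] corners(6) corners(5) corners(1) corners(2)])
    next
      assume eb: "Qb = ord_down"
      show ?thesis
        by (rule S_help[OF oo(4) oo(4) oo(1) Qa(2)[unfolded ea] Qb(2)[unfolded eb] corners(6) corners(5) corners(5) corners(6)])
    qed
  qed
qed



fun ndeg :: "(pt \<times> pt) list \<Rightarrow> nat" where
  "ndeg (x # y # r) = (if x = y then 0 else 1) + ndeg (y # r)"
| "ndeg _ = 0"

lemma contig_min:
  assumes pS: "chainok (L5 A B p)"
    and pmin: "\<forall>q. chainok (L5 A B q) \<longrightarrow> ccost (L5 A B p) \<le> ccost (L5 A B q)"
    and pnd: "\<forall>q. chainok (L5 A B q) \<and> (\<forall>q'. chainok (L5 A B q') \<longrightarrow> ccost (L5 A B q) \<le> ccost (L5 A B q'))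
               \<longrightarrow> ndeg (L5 A B p) \<le> ndeg (L5 A B q)"
    and Q: "Q \<in> orderings" "Q = {z. g z \<ge> 1}"
  shows "contig g (L5 A B p)"
proof (rule ccontr)
  assume nc: "\<not> contig g (L5 A B p)"
  obtain x1 x2 x3 where p: "p = (x1, x2, x3)" by (cases p) auto
  have better: False if "chainok (L5 A B q)" "ccost (L5 A B q) \<le> ccost (L5 A B p)"
    "ndeg (L5 A B q) < ndeg (L5 A B p)" for q
  proof -
    have "\<forall>q'. chainok (L5 A B q') \<longrightarrow> ccost (L5 A B q) \<le> ccost (L5 A B q')"
      using that(2) pmin by fastforce
    then have "ndeg (L5 A B p) \<le> ndeg (L5 A B q)" using pnd that(1) by blast
    then show False using that(3) by simp
  qed
  have ch: "\<exists>Q\<in>orderings. A \<in> Q \<and> x1 \<in> Q" "\<exists>Q\<in>orderings. x1 \<in> Q \<and> x2 \<in> Q"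
    "\<exists>Q\<in>orderings. x2 \<in> Q \<and> x3 \<in> Q" "\<exists>Q\<in>orderings. x3 \<in> Q \<and> B \<in> Q"
    using pS unfolding p L5_def by auto
  have self: "\<exists>Q\<in>orderings. z \<in> Q \<and> z \<in> Q" if "z \<in> {A, x1, x2, x3, B}" for z
    using ch that by blast
  have cp: "ccost (L5 A B p) = Nn (x1 - A) + Nn (x2 - x1) + Nn (x3 - x2) + Nn (B - x3)"
    unfolding p L5_def by simp
  have ndp: "ndeg (L5 A B p) = (if A = x1 then 0 else 1) + (if x1 = x2 then 0 else 1) +
       (if x2 = x3 then 0 else 1) + (if x3 = B then 0 else 1)"
    unfolding p L5_def by simp
  have ge: "Nn (B - x3) \<ge> 0" "Nn (x1 - A) \<ge> 0" "Nn (x2 - x1) \<ge> 0" "Nn (x3 - x2) \<ge> 0"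
    by (auto intro: Nn_ge0)
  have tr: "Nn (x2 - A) \<le> Nn (x1 - A) + Nn (x2 - x1)" "Nn (x3 - x1) \<le> Nn (x2 - x1) + Nn (x3 - x2)"
    "Nn (x3 - A) \<le> Nn (x2 - A) + Nn (x3 - x2)" "Nn (B - x2) \<le> Nn (x3 - x2) + Nn (B - x3)"
    "Nn (B - x1) \<le> Nn (x2 - x1) + Nn (B - x2)" "Nn (B - A) \<le> Nn (x1 - A) + Nn (B - x1)"
    by (rule Nn_tri)+
  have viol: "(g A \<ge> 1 \<and> g x1 < 1 \<and> g x2 \<ge> 1) \<or> (g A \<ge> 1 \<and> g x1 < 1 \<and> g x3 \<ge> 1) \<or>
      (g A \<ge> 1 \<and> g x1 < 1 \<and> g B \<ge> 1) \<or> (g x1 \<ge> 1 \<and> g x2 < 1 \<and> g x3 \<ge> 1) \<or>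
      (g x1 \<ge> 1 \<and> g x2 < 1 \<and> g B \<ge> 1) \<or> (g x2 \<ge> 1 \<and> g x3 < 1 \<and> g B \<ge> 1)"
    using nc unfolding p L5_def by (auto simp: not_less)
  have inQ: "z \<in> Q \<longleftrightarrow> g z \<ge> 1" for z using Q by auto
  show False
    using viol
  proof (elim disjE conjE)
    assume h: "g A \<ge> 1" "g x1 < 1" "g x2 \<ge> 1"
    show False
    proof (rule better[of "(A, x2, x3)"])
      show "chainok (L5 A B (A, x2, x3))"
      proof -
        have j: "\<exists>Q'\<in>orderings. A \<in> Q' \<and> x2 \<in> Q'" using Q(1) h inQ by blast
        show ?thesis unfolding L5_def fst_conv snd_conv chainok.simps using self[of A] ch j by blast
      qed
      show "ccost (L5 A B (A, x2, x3)) \<le> ccost (L5 A B p)" using tr ge by (simp add: L5_def p)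
      show "ndeg (L5 A B (A, x2, x3)) < ndeg (L5 A B p)" using h by (auto simp: L5_def p)
    qed
  next
    assume h: "g A \<ge> 1" "g x1 < 1" "g x3 \<ge> 1"
    show False
    proof (rule better[of "(A, A, x3)"])
      show "chainok (L5 A B (A, A, x3))"
      proof -
        have j: "\<exists>Q'\<in>orderings. A \<in> Q' \<and> x3 \<in> Q'" using Q(1) h inQ by blast
        show ?thesis unfolding L5_def fst_conv snd_conv chainok.simps using self[of A] ch j by blast
      qed
      show "ccost (L5 A B (A, A, x3)) \<le> ccost (L5 A B p)" using tr ge by (simp add: L5_def p)
      show "ndeg (L5 A B (A, A, x3)) < ndeg (L5 A B p)" using h by (auto simp: L5_def p)
    qed
  next
    assume h: "g A \<ge> 1" "g x1 < 1" "g B \<ge> 1"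
    show False
    proof (rule better[of "(A, A, A)"])
      show "chainok (L5 A B (A, A, A))"
      proof -
        have j: "\<exists>Q'\<in>orderings. A \<in> Q' \<and> B \<in> Q'" using Q(1) h inQ by blast
        show ?thesis unfolding L5_def fst_conv snd_conv chainok.simps using self[of A] ch j by blast
      qed
      show "ccost (L5 A B (A, A, A)) \<le> ccost (L5 A B p)" using tr ge by (simp add: L5_def p)
      show "ndeg (L5 A B (A, A, A)) < ndeg (L5 A B p)" using h by (auto simp: L5_def p)
    qed
  next
    assume h: "g x1 \<ge> 1" "g x2 < 1" "g x3 \<ge> 1"
    show False
    proof (rule better[of "(x1, x1, x3)"])
      show "chainok (L5 A B (x1, x1, x3))"
      proof -
        have j: "\<exists>Q'\<in>orderings. x1 \<in> Q' \<and> x3 \<in> Q'" using Q(1) h inQ by blast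
        show ?thesis unfolding L5_def fst_conv snd_conv chainok.simps using self[of x1] ch j by blast
      qed
      show "ccost (L5 A B (x1, x1, x3)) \<le> ccost (L5 A B p)" using tr ge by (simp add: L5_def p)
      show "ndeg (L5 A B (x1, x1, x3)) < ndeg (L5 A B p)" using h by (auto simp: L5_def p)
    qed
  next
    assume h: "g x1 \<ge> 1" "g x2 < 1" "g B \<ge> 1"
    show False
    proof (rule better[of "(x1, x1, x1)"])
      show "chainok (L5 A B (x1, x1, x1))"
      proof -
        have j: "\<exists>Q'\<in>orderings. x1 \<in> Q' \<and> B \<in> Q'" using Q(1) h inQ by blast
        show ?thesis unfolding L5_def fst_conv snd_conv chainok.simps using self[of x1] ch j by blast
      qed
      show "ccost (L5 A B (x1, x1, x1)) \<le> ccost (L5 A B p)" using tr ge by (simp add: L5_def p)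
      show "ndeg (L5 A B (x1, x1, x1)) < ndeg (L5 A B p)" using h by (auto simp: L5_def p)
    qed
  next
    assume h: "g x2 \<ge> 1" "g x3 < 1" "g B \<ge> 1"
    show False
    proof (rule better[of "(x1, x2, x2)"])
      show "chainok (L5 A B (x1, x2, x2))"
      proof -
        have j: "\<exists>Q'\<in>orderings. x2 \<in> Q' \<and> B \<in> Q'" using Q(1) h inQ by blast
        show ?thesis unfolding L5_def fst_conv snd_conv chainok.simps using self[of x2] ch j by blast
      qed
      show "ccost (L5 A B (x1, x2, x2)) \<le> ccost (L5 A B p)" using tr ge by (simp add: L5_def p)
      show "ndeg (L5 A B (x1, x2, x2)) < ndeg (L5 A B p)" using h by (auto simp: L5_def p)
    qed
  qed
qed



lemma traj_pl:
  assumes "xs \<noteq> []"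
    and lin: "\<And>a b. \<pi> (a + b) = \<pi> a + \<pi> b" "\<And>a b. \<pi> (a - b) = \<pi> a - \<pi> b"
      "\<And>u a. \<pi> (u *\<^sub>R a) = u *\<^sub>R \<pi> a"
    and nn: "\<And>z. l1n (\<pi> z) \<le> Nn z"
  shows "trajectory (\<lambda>t. \<pi> (pl xs t)) 0 (ccost xs)"
  unfolding trajectory_def
proof (intro conjI ballI)
  show "0 \<le> ccost xs" by (rule ccost_ge0)
  fix s t assume s: "s \<in> {0..ccost xs}" and t: "t \<in> {0..ccost xs}"
  have "l1dist (\<pi> (pl xs s)) (\<pi> (pl xs t)) = l1n (\<pi> (pl xs s - pl xs t))"
    by (simp add: l1dist_l1n lin)
  also have "\<dots> \<le> Nn (pl xs s - pl xs t)" by (rule nn)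
  also have "\<dots> \<le> \<bar>s - t\<bar>" using pl_lip s t by blast
  finally show "l1dist (\<pi> (pl xs s)) (\<pi> (pl xs t)) \<le> \<bar>s - t\<bar>" .
next
  show "polygonal_chain ((\<lambda>t. \<pi> (pl xs t)) ` {0..ccost xs})"
    unfolding pl_image[OF assms(1) lin] using assms(1) by (intro polyset_chain) simp
qed

lemma sched_lbpath:
  assumes "schedule_from_to M s0 s1 A B"
  shows "lbpath M s0 s1"
proof -
  have f: "feasible_schedule M s0 s1" using assms unfolding schedule_from_to_def by blast
  then have t1: "trajectory (\<lambda>t. fst (M t)) s0 s1" and t2: "trajectory (\<lambda>t. snd (M t)) s0 s1"
    and inF: "\<forall>t\<in>{s0..s1}. M t \<in> F2" unfolding feasible_schedule_def by auto
  show ?thesis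
  proof
    show "s0 \<le> s1" using t1 unfolding trajectory_def by blast
    show "\<forall>t\<in>{s0..s1}. M t \<in> F2" by (rule inF)
    show "\<forall>s\<in>{s0..s1}. \<forall>t\<in>{s0..s1}. Nn (M s - M t) \<le> \<bar>s - t\<bar>"
    proof (intro ballI)
      fix s t assume s: "s \<in> {s0..s1}" and t: "t \<in> {s0..s1}"
      have a: "l1dist (fst (M s)) (fst (M t)) \<le> \<bar>s - t\<bar>" using t1 s t unfolding trajectory_def by blast
      have b: "l1dist (snd (M s)) (snd (M t)) \<le> \<bar>s - t\<bar>" using t2 s t unfolding trajectory_def by blast
      show "Nn (M s - M t) \<le> \<bar>s - t\<bar>" using a b unfolding Nn_def l1dist_l1n by simp
    qed
  qed
qed

theorem corollary3p2:
  assumes "A \<in> F2" and "B \<in> F2"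
  shows "\<exists>M t0 t1. schedule_from_to M t0 t1 A B \<and>
           (\<forall>M' s0 s1. schedule_from_to M' s0 s1 A B \<longrightarrow> t1 - t0 \<le> s1 - s0) \<and>
           (\<forall>Ord\<in>orderings. {t\<in>{t0..t1}. M t \<in> Ord} = {} \<or> is_interval {t\<in>{t0..t1}. M t \<in> Ord})"
proof -
  obtain p0 where p0: "chainok (L5 A B p0)" using S_nonempty assms by blast
  obtain pm where pm: "chainok (L5 A B pm)" "\<forall>q. chainok (L5 A B q) \<longrightarrow> ccost (L5 A B pm) \<le> ccost (L5 A B q)"
    using min_exists[of p0 A B] p0 by auto
  define P where "P q \<longleftrightarrow> chainok (L5 A B q) \<and> (\<forall>q'. chainok (L5 A B q') \<longrightarrow> ccost (L5 A B q) \<le> ccost (L5 A B q'))" for q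
  have "P pm" unfolding P_def using pm by blast
  then obtain p where p: "P p" "\<forall>q. P q \<longrightarrow> ndeg (L5 A B p) \<le> ndeg (L5 A B q)"
    using ex_has_least_nat[of P pm "\<lambda>q. ndeg (L5 A B q)"] by blast
  have pS: "chainok (L5 A B p)" and pmin: "\<forall>q. chainok (L5 A B q) \<longrightarrow> ccost (L5 A B p) \<le> ccost (L5 A B q)"
    using p(1) unfolding P_def by auto
  have pnd: "\<forall>q. chainok (L5 A B q) \<and> (\<forall>q'. chainok (L5 A B q') \<longrightarrow> ccost (L5 A B q) \<le> ccost (L5 A B q'))
               \<longrightarrow> ndeg (L5 A B p) \<le> ndeg (L5 A B q)"
    using p(2) unfolding P_def by blast
  define xs where "xs = L5 A B p"
  define M where "M = pl xs"
  have xsne: "xs \<noteq> []" and hd: "hd xs = A" and lst: "last xs = B" unfolding xs_def L5_def by auto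
  have ch: "chainok xs" using pS unfolding xs_def .
  have tr1: "trajectory (\<lambda>t. fst (M t)) 0 (ccost xs)"
    unfolding M_def by (rule traj_pl[OF xsne]) (auto simp: Nn_fst)
  have tr2: "trajectory (\<lambda>t. snd (M t)) 0 (ccost xs)"
    unfolding M_def by (rule traj_pl[OF xsne]) (auto simp: Nn_snd)
  have inF: "\<forall>t\<in>{0..ccost xs}. M t \<in> F2"
    unfolding M_def using pl_F2[OF xsne ch] hd assms(1) by blast
  have sched: "schedule_from_to M 0 (ccost xs) A B"
    unfolding schedule_from_to_def feasible_schedule_def M_def
    using tr1 tr2 inF pl_0[OF xsne] pl_end[OF xsne] hd lst unfolding M_def by auto
  have opt: "ccost xs - 0 \<le> s1 - s0" if "schedule_from_to M' s0 s1 A B" for M' s0 s1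
  proof -
    interpret lbpath M' s0 s1 by (rule sched_lbpath[OF that])
    have ends: "M' s0 = A" "M' s1 = B" using that unfolding schedule_from_to_def by auto
    obtain zs where zs: "zs \<noteq> []" "hd zs = A" "last zs = B" "chainok zs" "ccost zs \<le> s1 - s0"
      "length zs \<le> 5" using lb_chain5 ends by auto
    obtain ys where ys: "length ys = 5" "hd ys = A" "last ys = B" "chainok ys" "ccost ys = ccost zs"
      using padn[OF zs(1) zs(4), of 5] zs assms(2) by auto
    obtain y0 y1 y2 y3 y4 where yeq: "ys = [y0, y1, y2, y3, y4]"
      using ys(1) by (auto simp: numeral_eq_Suc length_Suc_conv)
    have "ys = L5 A B (y1, y2, y3)" using yeq ys(2,3) unfolding L5_def by simp
    then have "ccost xs \<le> ccost ys" using pmin ys(4) unfolding xs_def by metis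
    then show ?thesis using ys zs by simp
  qed
  have ivl: "is_interval {t\<in>{0..ccost xs}. M t \<in> Ord}" if Ordin: "Ord \<in> orderings" for Ord
  proof -
    obtain g where g: "aff g" "Ord = {z. g z \<ge> 1}" using orderings_aff[OF Ordin] by auto
    have "contig g xs" unfolding xs_def by (rule contig_min[OF pS pmin pnd Ordin g(2)])
    then have "is_interval {t\<in>{0..ccost xs}. g (pl xs t) \<ge> 1}" by (rule pl_interval[OF xsne g(1)])
    then show ?thesis unfolding M_def g(2) by simp
  qed
  show ?thesis
    by (rule exI[of _ M], rule exI[of _ 0], rule exI[of _ "ccost xs"]) (use sched opt ivl in blast)
qed


end
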